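(* Let $D_n$ denote the diameter of $\mathcal{T}_n$. Then $D_0=0$ and, for every $n\ge 1$, $$D_n=\begin{cases}2D_{n-1}+1 & \text{if } n \text{ is odd},\\ 2D_{n-1} & \text{if } n \text{ is even}.\end{cases}$$
   Context: For $n\in\mathbb{N}$ let $G_n=\mathbb{Z}_{2^n}\times\mathbb{Z}_{2^n}$ (additive group), so $|G_n|=N=4^n$. Let $S^+=\{(-1,-1),(1,0),(0,1)\}$ and $S=S^+\cup(-S^+)=\{\pm(1,0),\pm(0,1),\pm(1,1)\}$. The undirected graph $\mathcal{T}_n$ (the undirected "arrowhead", equivalently the undirected "diamond") is the Cayley graph $\Gamma(G_n,S)$: its vertex set is $G_n$ and each vertex $u$ is adjacent to $u+s$ for every $s\in S$ (arithmetic modulo $2^n$ in each coordinate). The diameter of a graph is the maximum, over all pairs of vertices, of the length of a shortest path between them. ($\mathcal{T}_0$ is a single vertex.) *)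

theory Defs
  imports Main
begin

text \<open>The group G_n = Z_(2^n) x Z_(2^n), represented by pairs of integer
  representatives in {0..<2^n}.\<close>

definition verts :: "nat \<Rightarrow> (int \<times> int) set" where
  "verts n = {0..<2^n} \<times> {0..<2^n}"

definition gens :: "(int \<times> int) set" where
  "gens = {(1,0), (-1,0), (0,1), (0,-1), (1,1), (-1,-1)}"

definition gadd :: "nat \<Rightarrow> int \<times> int \<Rightarrow> int \<times> int \<Rightarrow> int \<times> int" where
  "gadd n u s = ((fst u + fst s) mod 2^n, (snd u + snd s) mod 2^n)"

definition adj :: "nat \<Rightarrow> ((int \<times> int) \<times> (int \<times> int)) set" where
  "adj n = {(u, v). u \<in> verts n \<and> (\<exists>s\<in>gens. v = gadd n u s)}"

definition gdist :: "nat \<Rightarrow> int \<times> int \<Rightarrow> int \<times> int \<Rightarrow> nat" where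
  "gdist n u v = (LEAST k. (u, v) \<in> adj n ^^ k)"

definition diam :: "nat \<Rightarrow> nat" where
  "diam n = Max {gdist n u v | u v. u \<in> verts n \<and> v \<in> verts n}"

end

theory Submission
  imports Defs
begin

definition hn :: "int \<Rightarrow> int \<Rightarrow> int" where
  "hn x y = max \<bar>x\<bar> (max \<bar>y\<bar> \<bar>x - y\<bar>)"

lemma step_gen:
  assumes "hn x y = int (Suc k)"
  shows "\<exists>s\<in>gens. hn (x - fst s) (y - snd s) = int k"
proof -
  have c: "(x>0\<and>y>0) \<or> (x<0\<and>y<0) \<or> (x>0\<and>y\<le>0) \<or> (x<0\<and>y\<ge>0) \<or> (x=0\<and>y>0) \<or> (x=0\<and>y<0) \<or> (x=0\<and>y=0)"
    by auto
  show ?thesis using c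
  proof (elim disjE)
    assume h: "x>0\<and>y>0"
    show ?thesis by (rule bexI[of _ "(1,1)"]) (use h assms in \<open>auto simp: hn_def gens_def\<close>)
  next
    assume h: "x<0\<and>y<0"
    show ?thesis by (rule bexI[of _ "(-1,-1)"]) (use h assms in \<open>auto simp: hn_def gens_def\<close>)
  next
    assume h: "x>0\<and>y\<le>0"
    show ?thesis by (rule bexI[of _ "(1,0)"]) (use h assms in \<open>auto simp: hn_def gens_def\<close>)
  next
    assume h: "x<0\<and>y\<ge>0"
    show ?thesis by (rule bexI[of _ "(-1,0)"]) (use h assms in \<open>auto simp: hn_def gens_def\<close>)
  next
    assume h: "x=0\<and>y>0"
    show ?thesis by (rule bexI[of _ "(0,1)"]) (use h assms in \<open>auto simp: hn_def gens_def\<close>)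
  next
    assume h: "x=0\<and>y<0"
    show ?thesis by (rule bexI[of _ "(0,-1)"]) (use h assms in \<open>auto simp: hn_def gens_def\<close>)
  next
    assume h: "x=0\<and>y=0"
    then show ?thesis using assms by (simp add: hn_def)
  qed
qed

lemma walk_upper:
  assumes "u \<in> verts n"
  shows "hn x y = int k \<Longrightarrow> (u, ((fst u + x) mod 2^n, (snd u + y) mod 2^n)) \<in> adj n ^^ k"
proof (induction k arbitrary: x y)
  case 0
  then have "x = 0" "y = 0" by (auto simp: hn_def)
  moreover have "fst u mod 2^n = fst u" "snd u mod 2^n = snd u"
    using assms by (auto simp: verts_def)
  ultimately show ?case by simp
next
  case (Suc k)
  obtain s where s: "s \<in> gens" "hn (x - fst s) (y - snd s) = int k"
    using step_gen[OF Suc.prems] by blast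
  define w where "w = ((fst u + (x - fst s)) mod 2^n, (snd u + (y - snd s)) mod 2^n)"
  have 1: "(u, w) \<in> adj n ^^ k" using Suc.IH[OF s(2)] by (simp add: w_def)
  have wv: "w \<in> verts n" by (simp add: w_def verts_def)
  have "gadd n w s = ((fst u + x) mod 2^n, (snd u + y) mod 2^n)"
    by (simp add: gadd_def w_def mod_add_left_eq)
  then have 2: "(w, ((fst u + x) mod 2^n, (snd u + y) mod 2^n)) \<in> adj n"
    using wv s(1) unfolding adj_def by force
  show ?case using 1 2 by auto
qed

lemma walk_lower:
  "(u, v) \<in> adj n ^^ k \<Longrightarrow> \<exists>i j. hn (fst v - fst u + i * 2^n) (snd v - snd u + j * 2^n) \<le> int k"
proof (induction k arbitrary: v)
  case 0
  then show ?case by (intro exI[of _ 0]) (simp add: hn_def)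
next
  case (Suc k)
  then obtain w where w: "(u, w) \<in> adj n ^^ k" "(w, v) \<in> adj n" by auto
  obtain i j where ij: "hn (fst w - fst u + i * 2^n) (snd w - snd u + j * 2^n) \<le> int k"
    using Suc.IH[OF w(1)] by blast
  obtain s where s: "s \<in> gens" "v = gadd n w s" using w(2) unfolding adj_def by auto
  define a where "a = (fst w + fst s) div 2^n"
  define b where "b = (snd w + snd s) div 2^n"
  have va: "fst v = fst w + fst s - a * 2^n"
    using s(2) unfolding gadd_def a_def by (simp add: minus_div_mult_eq_mod [symmetric])
  have vb: "snd v = snd w + snd s - b * 2^n"
    using s(2) unfolding gadd_def b_def by (simp add: minus_div_mult_eq_mod [symmetric])
  have sb: "\<bar>fst s\<bar> \<le> 1 \<and> \<bar>snd s\<bar> \<le> 1 \<and> \<bar>fst s - snd s\<bar> \<le> 1"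
    using s(1) by (auto simp: gens_def)
  have "hn (fst v - fst u + (i + a) * 2^n) (snd v - snd u + (j + b) * 2^n) \<le> int (Suc k)"
    using ij sb unfolding va vb hn_def by (simp add: algebra_simps) linarith
  then show ?case by blast
qed

lemma hn_le: "hn x y \<le> K \<longleftrightarrow> -K \<le> x \<and> x \<le> K \<and> -K \<le> y \<and> y \<le> K \<and> -K \<le> x - y \<and> x - y \<le> K"
  unfolding hn_def by (simp add: abs_le_iff) linarith

lemma cover:
  fixes m K a b :: int
  assumes "0 \<le> a" "a < m" "0 \<le> b" "b < m" "3*K \<le> 2*m" "2*m < 3*K+3"
  shows "\<exists>x y. (x = a \<or> x = a - m) \<and> (y = b \<or> y = b - m) \<and> hn x y \<le> K"
proof -
  consider "a \<le> K \<and> b \<le> K" | "a \<ge> m-K \<and> b \<ge> m-K" | "b - a \<ge> m - K" | "a - b \<ge> m - K"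
    using assms by linarith
  then show ?thesis
  proof cases
    case 1 then show ?thesis using assms by (intro exI[of _ a] exI[of _ b]) (simp add: hn_le)
  next
    case 2 then show ?thesis using assms by (intro exI[of _ "a-m"] exI[of _ "b-m"]) (simp add: hn_le)
  next
    case 3 then show ?thesis using assms by (intro exI[of _ a] exI[of _ "b-m"]) (simp add: hn_le)
  next
    case 4 then show ?thesis using assms by (intro exI[of _ "a-m"] exI[of _ b]) (simp add: hn_le)
  qed
qed

lemma hn_ge: "K \<le> hn x y \<longleftrightarrow> K \<le> \<bar>x\<bar> \<or> K \<le> \<bar>y\<bar> \<or> K \<le> \<bar>x - y\<bar>"
  unfolding hn_def by auto

lemma far:
  fixes m K i j :: int
  assumes "3*K \<le> 2*m" "2*m < 3*K+3" "m \<ge> 1"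
  shows "hn (m - K + i*m) (K + j*m) \<ge> K"
proof -
  have K0: "K \<ge> 0" using assms by linarith
  consider "i \<ge> 1" | "i \<le> -2" | "i = -1" | "i = 0"  by linarith
  then show ?thesis
  proof cases
    case 1 then have "i*m \<ge> 1*m" using assms by (intro mult_right_mono) auto
    then have "K \<le> \<bar>m - K + i*m\<bar>" using assms by linarith
    then show ?thesis unfolding hn_ge by blast
  next
    case 2 then have "i*m \<le> (-2)*m" using assms by (intro mult_right_mono) auto
    then have "K \<le> \<bar>m - K + i*m\<bar>" using assms by linarith
    then show ?thesis unfolding hn_ge by blast
  next
    case 3 then have "K \<le> \<bar>m - K + i*m\<bar>" using K0 by simp
    then show ?thesis unfolding hn_ge by blast
  next
    case 4
    consider "j \<ge> 1" | "j \<le> -2" | "j = -1" | "j = 0"  by linarith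
    then show ?thesis
    proof cases
      case 1 then have "j*m \<ge> 1*m" using assms by (intro mult_right_mono) auto
      then have "K \<le> \<bar>K + j*m\<bar>" using assms by linarith
      then show ?thesis unfolding hn_ge by blast
    next
      case 2 then have "j*m \<le> (-2)*m" using assms by (intro mult_right_mono) auto
      then have "K \<le> \<bar>K + j*m\<bar>" using assms by linarith
      then show ?thesis unfolding hn_ge by blast
    next
      case 3 then have "K \<le> \<bar>(m - K + i*m) - (K + j*m)\<bar>" using assms \<open>i = 0\<close> by simp
      then show ?thesis unfolding hn_ge by blast
    next
      case 5: 4 then have "K \<le> \<bar>K + j*m\<bar>" using K0 by simp
      then show ?thesis unfolding hn_ge by blast
    qed
  qed
qed

definition KK :: "nat \<Rightarrow> nat" where "KK n = 2^(n+1) div 3"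

lemma KK_bounds: "3 * int (KK n) \<le> 2 * (2::int)^n" "2 * (2::int)^n < 3 * int (KK n) + 3"
proof -
  have a: "3 * KK n \<le> 2 * 2^n" "2 * 2^n < 3 * KK n + 3" unfolding KK_def by auto
  have "int (3 * KK n) \<le> int (2 * 2^n)" using a(1) by linarith
  then show "3 * int (KK n) \<le> 2 * (2::int)^n" by simp
  have "int (2 * 2^n) < int (3 * KK n + 3)" using a(2) by linarith
  then show "2 * (2::int)^n < 3 * int (KK n) + 3" by simp
qed

lemma reach:
  assumes "u \<in> verts n" "v \<in> verts n"
  shows "\<exists>k. (u, v) \<in> adj n ^^ k \<and> k \<le> KK n"
proof -
  define m :: int where "m = 2^n"
  have m1: "m \<ge> 1" by (simp add: m_def)
  define a where "a = (fst v - fst u) mod m"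
  define b where "b = (snd v - snd u) mod m"
  have ab: "0 \<le> a" "a < m" "0 \<le> b" "b < m" using m1 by (auto simp: a_def b_def)
  obtain x y where xy: "x = a \<or> x = a - m" "y = b \<or> y = b - m" "hn x y \<le> int (KK n)"
    using cover[OF ab KK_bounds[of n, folded m_def]] by blast
  have h0: "hn x y \<ge> 0" by (simp add: hn_def)
  define k where "k = nat (hn x y)"
  have hk: "hn x y = int k" using h0 by (simp add: k_def)
  have kK: "k \<le> KK n" using xy(3) hk by linarith
  have uv: "0 \<le> fst v" "fst v < m" "0 \<le> snd v" "snd v < m" using assms(2) by (auto simp: verts_def m_def)
  have ex: "(fst u + x) mod m = fst v"
  proof -
    have "(fst u + x) mod m = (fst u + a) mod m" using xy(1)
      by (metis add_diff_eq minus_mod_self2)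
    also have "\<dots> = (fst u + (fst v - fst u)) mod m" unfolding a_def by (simp add: mod_add_right_eq)
    also have "\<dots> = fst v" using uv by simp
    finally show ?thesis .
  qed
  have ey: "(snd u + y) mod m = snd v"
  proof -
    have "(snd u + y) mod m = (snd u + b) mod m" using xy(2)
      by (metis add_diff_eq minus_mod_self2)
    also have "\<dots> = (snd u + (snd v - snd u)) mod m" unfolding b_def by (simp add: mod_add_right_eq)
    also have "\<dots> = snd v" using uv by simp
    finally show ?thesis .
  qed
  have "(u, ((fst u + x) mod 2^n, (snd u + y) mod 2^n)) \<in> adj n ^^ k"
    by (rule walk_upper[OF assms(1) hk])
  then have "(u, v) \<in> adj n ^^ k" using ex ey by (simp add: m_def)
  then show ?thesis using kK by blast
qed

lemma gdist_le:
  assumes "u \<in> verts n" "v \<in> verts n"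
  shows "gdist n u v \<le> KK n" "(u, v) \<in> adj n ^^ gdist n u v"
proof -
  obtain k where k: "(u, v) \<in> adj n ^^ k" "k \<le> KK n" using reach[OF assms] by blast
  show "gdist n u v \<le> KK n" unfolding gdist_def using Least_le[of "\<lambda>k. (u, v) \<in> adj n ^^ k" k] k by linarith
  show "(u, v) \<in> adj n ^^ gdist n u v" unfolding gdist_def by (rule LeastI[of "\<lambda>k. (u, v) \<in> adj n ^^ k" k]) (rule k(1))
qed

lemma diam_eq: "diam n = KK n"
proof -
  define S where "S = {gdist n u v | u v. u \<in> verts n \<and> v \<in> verts n}"
  have le: "\<forall>y\<in>S. y \<le> KK n" unfolding S_def using gdist_le(1) by blast
  have fin: "finite S" proof (rule finite_subset[of S "{..KK n}"])
    show "S \<subseteq> {..KK n}" using le by auto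
  qed simp
  have mem: "KK n \<in> S"
  proof (cases "KK n = 0")
    case True
    have "(0,0) \<in> verts n" by (simp add: verts_def)
    then have "gdist n (0,0) (0,0) \<in> S" unfolding S_def by blast
    then show ?thesis using le True by fastforce
  next
    case False
    define m :: int where "m = 2^n"
    have m1: "m \<ge> 1" by (simp add: m_def)
    have b: "3 * int (KK n) \<le> 2 * m" "2 * m < 3 * int (KK n) + 3"
      using KK_bounds unfolding m_def by auto
    define w where "w = (m - int (KK n), int (KK n))"
    have wv: "w \<in> verts n" using b False unfolding w_def verts_def m_def[symmetric] by auto
    have zv: "(0,0) \<in> verts n" by (simp add: verts_def)
    obtain i j where ij: "hn (fst w - 0 + i * 2^n) (snd w - 0 + j * 2^n) \<le> int (gdist n (0,0) w)"
      using walk_lower[OF gdist_le(2)[OF zv wv]] by auto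
    have "hn (m - int (KK n) + i*m) (int (KK n) + j*m) \<ge> int (KK n)"
      by (rule far[OF b m1])
    then have "KK n \<le> gdist n (0,0) w" using ij unfolding w_def m_def by simp
    then have "gdist n (0,0) w = KK n" using gdist_le(1)[OF zv wv] by simp
    moreover have "gdist n (0,0) w \<in> S" unfolding S_def using zv wv by blast
    ultimately show ?thesis by simp
  qed
  show ?thesis unfolding diam_def S_def[symmetric] by (rule Max_eqI[OF fin]) (use le mem in auto)
qed

lemma pow2_mod3: "(2::nat)^n mod 3 = (if even n then 1 else 2)"
proof (induction n)
  case 0 then show ?case by simp
next
  case (Suc n)
  have "(2::nat)^Suc n mod 3 = (2 * (2^n mod 3)) mod 3" by (simp add: mod_mult_right_eq)
  then show ?case using Suc by (cases "even n") simp_all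
qed

theorem lemma1:
  shows "diam 0 = 0 \<and>
    (\<forall>n::nat. n \<ge> 1 \<longrightarrow>
      diam n = (if odd n then 2 * diam (n - 1) + 1 else 2 * diam (n - 1)))"
proof -
  have "diam 0 = 0" by (simp add: diam_eq KK_def)
  moreover have "diam n = (if odd n then 2 * diam (n - 1) + 1 else 2 * diam (n - 1))" if n1: "n \<ge> 1" for n
  proof -
    obtain p where p: "n = Suc p" using n1 by (cases n) auto
    define t :: nat where "t = 2^n"
    have t: "t mod 3 = (if even n then 1 else 2)" unfolding t_def by (rule pow2_mod3)
    have d1: "diam n = (2*t) div 3" by (simp add: diam_eq KK_def t_def)
    have d0: "diam (n-1) = t div 3" by (simp add: diam_eq KK_def t_def p)
    have tt: "t = 3 * (t div 3) + t mod 3" by simp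
    show ?thesis
    proof (cases "even n")
      case True
      then have "t = 3 * (t div 3) + 1" using t tt by simp
      then have "2*t = 3 * (2 * (t div 3)) + 2" by (simp add: algebra_simps)
      then have "(2*t) div 3 = 2 * (t div 3)" by linarith
      then show ?thesis using True unfolding d1 d0 by simp
    next
      case False
      then have "t = 3 * (t div 3) + 2" using t tt by simp
      then have "2*t = 3 * (2 * (t div 3) + 1) + 1" by (simp add: algebra_simps)
      then have "(2*t) div 3 = 2 * (t div 3) + 1" by presburger
      then show ?thesis using False unfolding d1 d0 by simp
    qed
  qed
  ultimately show ?thesis by blast
qed

end
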